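(* Let $f:[0,\infty)\to[0,\infty)$ be continuous and nondecreasing with $f(u)\le Au^\alpha$ for all $u\ge0$, where $A>0$ and $\alpha>1+\frac2q$. If $0\le u_0\in L^1(\mathbb{R}^n)\cap L^\infty(\mathbb{R}^n)$ with $\|u_0\|_{L^1(\mathbb{R}^n)}$ and $\|u_0\|_{L^\infty(\mathbb{R}^n)}$ sufficiently small, then $$\int_0^\infty\Big\|\int_{\mathbb{R}^n}\Gamma(0,y;t,\cdot)u_0(y)\,dy\Big\|_{L^\infty(\mathbb{R}^n)}^{\alpha-1}dt<\frac{1}{A(\alpha-1)},$$ and consequently there exists a nonnegative global mild solution $u:[0,\infty)\to L^1(\mathbb{R}^n)$ of $u_t-\mathcal{L}u=f(u)$, $u(0)=u_0$, i.e. $u(t,x)=\int\Gamma(0,y;t,x)u_0(y)dy+\int_0^t\int\Gamma(0,y;t-\tau,x)f(u(\tau,y))\,dy\,d\tau$ for all $t\ge0$.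
   Context: Standing setting. Let $X=\{X_1,\dots,X_m\}$ be smooth vector fields on $\mathbb{R}^n$, linearly independent as vector fields, satisfying: (H1) there are integers $1=\sigma_1\le\dots\le\sigma_n$ such that, with dilations $\delta_\lambda(x)=(\lambda^{\sigma_1}x_1,\dots,\lambda^{\sigma_n}x_n)$, $\lambda>0$, each $X_j$ is homogeneous of degree $1$, i.e. $X_j(\phi\circ\delta_\lambda)=\lambda\,(X_j\phi)\circ\delta_\lambda$ for all $\phi\in C^\infty(\mathbb{R}^n)$, $\lambda>0$; (H2) Hörmander's rank condition at $0$: the values at $0$ of the vector fields in the Lie algebra generated by $X_1,\dots,X_m$ span $\mathbb{R}^n$. Put $q:=\sigma_1+\dots+\sigma_n$, $\mathcal{L}:=\sum_{j=1}^mX_j^2$, $\mathcal{H}:=\partial_t-\mathcal{L}$. $\Gamma(t,x;s,y)$ denotes the global fundamental solution (heat kernel) of $\mathcal{H}$; for $t>0$, $x\mapsto\int\Gamma(0,y;t,x)\varphi(y)dy$ is the heat semigroup of $\mathcal{L}$ applied to $\varphi$. Known properties: $\Gamma\ge0$; $\Gamma(t,x;s,y)=0$ if $s\le t$; $\Gamma(0,y;t,x)=\Gamma(0,x;t,y)$; $\int_{\mathbb{R}^n}\Gamma(0,y;t,x)\,dy=1$ for $t>0$; $\Gamma(0,y;t+s,x)=\int\Gamma(0,w;t,x)\Gamma(0,y;s,w)\,dw$ for $t,s>0$; there is $\rho>1$ with $\frac{1}{\rho|B_X(x,\sqrt s)|}e^{-\rho d_X(x,y)^2/s}\le\Gamma(0,x;s,y)\le\frac{\rho}{|B_X(x,\sqrt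 s)|}e^{-d_X(x,y)^2/(\rho s)}$ for $s>0$, where $d_X$ is the Carnot–Carathéodory distance of $X$ and $B_X$ its balls; and $|B_X(x,r)|\ge c\,r^q$ for some $c>0$ and all $x,r$. *)

theory Defs
  imports "HOL-Analysis.Analysis" "HOL-Probability.Essential_Supremum"
begin

fun Ck :: "nat \<Rightarrow> (real^'n \<Rightarrow> 'b::real_normed_vector) \<Rightarrow> bool" where
  "Ck 0 f = continuous_on UNIV f"
| "Ck (Suc k) f = (f differentiable_on UNIV \<and>
      (\<forall>v. Ck k (\<lambda>x. frechet_derivative f (at x) v)))"

definition smooth :: "(real^'n \<Rightarrow> 'b::real_normed_vector) \<Rightarrow> bool" where
  "smooth f \<longleftrightarrow> (\<forall>k. Ck k f)"

definition vf_apply :: "(real^'n \<Rightarrow> real^'n) \<Rightarrow> (real^'n \<Rightarrow> real) \<Rightarrow> real^'n \<Rightarrow> real" where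
  "vf_apply V \<phi> x = frechet_derivative \<phi> (at x) (V x)"

text \<open>Lie bracket [V,W] = V W - W V.\<close>
definition lie_bracket :: "(real^'n \<Rightarrow> real^'n) \<Rightarrow> (real^'n \<Rightarrow> real^'n) \<Rightarrow> real^'n \<Rightarrow> real^'n" where
  "lie_bracket V W x = frechet_derivative W (at x) (V x) - frechet_derivative V (at x) (W x)"

inductive_set lie_alg :: "(nat \<Rightarrow> real^'n \<Rightarrow> real^'n) \<Rightarrow> nat \<Rightarrow> (real^'n \<Rightarrow> real^'n) set"
  for X m where
  gen: "j < m \<Longrightarrow> X j \<in> lie_alg X m"
| add: "V \<in> lie_alg X m \<Longrightarrow> W \<in> lie_alg X m \<Longrightarrow> (\<lambda>x. V x + W x) \<in> lie_alg X m"
| smult: "V \<in> lie_alg X m \<Longrightarrow> (\<lambda>x. c *\<^sub>R V x) \<in> lie_alg X m"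
| bracket: "V \<in> lie_alg X m \<Longrightarrow> W \<in> lie_alg X m \<Longrightarrow> lie_bracket V W \<in> lie_alg X m"

definition dil :: "('n \<Rightarrow> nat) \<Rightarrow> real \<Rightarrow> real^'n \<Rightarrow> real^'n" where
  "dil \<sigma> l x = (\<chi> i. l ^ (\<sigma> i) * x $ i)"

text \<open>Standing hypotheses: smooth, linearly independent, (H1) homogeneous of degree 1
  w.r.t. the dilations with exponents sigma (min sigma = 1), (H2) Hoermander at 0.\<close>
definition hom_hoermander :: "(nat \<Rightarrow> real^'n \<Rightarrow> real^'n) \<Rightarrow> nat \<Rightarrow> ('n \<Rightarrow> nat) \<Rightarrow> bool" where
  "hom_hoermander X m \<sigma> \<longleftrightarrow>
     (\<forall>j<m. smooth (X j)) \<and>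
     (\<forall>c::nat \<Rightarrow> real. (\<forall>x. (\<Sum>j<m. c j *\<^sub>R X j x) = 0) \<longrightarrow> (\<forall>j<m. c j = 0)) \<and>
     (\<exists>i. \<sigma> i = 1) \<and> (\<forall>i. 1 \<le> \<sigma> i) \<and>
     (\<forall>j<m. \<forall>l>0. \<forall>\<phi>::real^'n \<Rightarrow> real. smooth \<phi> \<longrightarrow>
        (\<forall>x. vf_apply (X j) (\<phi> \<circ> dil \<sigma> l) x = l * vf_apply (X j) \<phi> (dil \<sigma> l x))) \<and>
     span ((\<lambda>V. V 0) ` lie_alg X m) = UNIV"

definition subunit :: "(nat \<Rightarrow> real^'n \<Rightarrow> real^'n) \<Rightarrow> nat \<Rightarrow> (real \<Rightarrow> real^'n) \<Rightarrow> real \<Rightarrow> bool" where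
  "subunit X m \<gamma> T \<longleftrightarrow> T \<ge> 0 \<and> (\<exists>L. L-lipschitz_on {0..T} \<gamma>) \<and>
     (AE t in lborel. t \<in> {0..T} \<longrightarrow>
        (\<exists>a::nat \<Rightarrow> real. (\<gamma> has_vector_derivative (\<Sum>j<m. a j *\<^sub>R X j (\<gamma> t))) (at t)
            \<and> (\<Sum>j<m. (a j)\<^sup>2) \<le> 1))"

definition cc_dist :: "(nat \<Rightarrow> real^'n \<Rightarrow> real^'n) \<Rightarrow> nat \<Rightarrow> real^'n \<Rightarrow> real^'n \<Rightarrow> real" where
  "cc_dist X m x y = Inf {T. \<exists>\<gamma>. subunit X m \<gamma> T \<and> \<gamma> 0 = x \<and> \<gamma> T = y}"

definition cc_ball :: "(nat \<Rightarrow> real^'n \<Rightarrow> real^'n) \<Rightarrow> nat \<Rightarrow> real^'n \<Rightarrow> real \<Rightarrow> (real^'n) set" where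
  "cc_ball X m x r = {y. cc_dist X m x y < r}"

definition heat_kernel_props ::
  "(nat \<Rightarrow> real^'n \<Rightarrow> real^'n) \<Rightarrow> nat \<Rightarrow> (real \<Rightarrow> real^'n \<Rightarrow> real \<Rightarrow> real^'n \<Rightarrow> real) \<Rightarrow> bool" where
  "heat_kernel_props X m \<Gamma> \<longleftrightarrow>
     (\<lambda>(t, x, s, y). \<Gamma> t x s y) \<in> borel_measurable borel \<and>
     (\<forall>t x s y. \<Gamma> t x s y \<ge> 0) \<and>
     (\<forall>t x s y. s \<le> t \<longrightarrow> \<Gamma> t x s y = 0) \<and>
     (\<forall>x y t. \<Gamma> 0 y t x = \<Gamma> 0 x t y) \<and>
     (\<forall>x t. t > 0 \<longrightarrow> (\<integral>\<^sup>+ y. ennreal (\<Gamma> 0 y t x) \<partial>lborel) = 1) \<and>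
     (\<forall>x y t s. t > 0 \<longrightarrow> s > 0 \<longrightarrow>
        ennreal (\<Gamma> 0 y (t + s) x) = (\<integral>\<^sup>+ w. ennreal (\<Gamma> 0 w t x * \<Gamma> 0 y s w) \<partial>lborel)) \<and>
     (\<exists>\<rho>>1. \<forall>x y s. s > 0 \<longrightarrow>
        1 / (\<rho> * measure lborel (cc_ball X m x (sqrt s))) * exp (- \<rho> * (cc_dist X m x y)\<^sup>2 / s)
          \<le> \<Gamma> 0 x s y \<and>
        \<Gamma> 0 x s y \<le> \<rho> / measure lborel (cc_ball X m x (sqrt s)) * exp (- (cc_dist X m x y)\<^sup>2 / (\<rho> * s)))"

definition ball_volume_bound :: "(nat \<Rightarrow> real^'n \<Rightarrow> real^'n) \<Rightarrow> nat \<Rightarrow> nat \<Rightarrow> bool" where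
  "ball_volume_bound X m q \<longleftrightarrow> (\<exists>c>0. \<forall>x r. r > 0 \<longrightarrow>
      ennreal (c * r ^ q) \<le> emeasure lborel (cc_ball X m x r))"

end

theory Submission
  imports Defs
begin

locale K =
  fixes \<Gamma> :: "real \<Rightarrow> real^'n \<Rightarrow> real \<Rightarrow> real^'n \<Rightarrow> real"
  assumes Gm: "(\<lambda>(t, x, s, y). \<Gamma> t x s y) \<in> borel_measurable borel"
begin

lemma Gam_meas[measurable (raw)]:
  assumes [measurable]: "g1 \<in> N \<rightarrow>\<^sub>M borel" "g2 \<in> N \<rightarrow>\<^sub>M borel" "g3 \<in> N \<rightarrow>\<^sub>M borel" "g4 \<in> N \<rightarrow>\<^sub>M borel"
  shows "(\<lambda>z. \<Gamma> (g1 z) (g2 z) (g3 z) (g4 z)) \<in> borel_measurable N"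
proof -
  have m: "(\<lambda>(t, x, s, y). \<Gamma> t x s y) \<in> borel_measurable (borel \<Otimes>\<^sub>M (borel \<Otimes>\<^sub>M (borel \<Otimes>\<^sub>M borel)))"
    using Gm by (simp add: borel_prod)
  have "(\<lambda>z. (g1 z, g2 z, g3 z, g4 z)) \<in> N \<rightarrow>\<^sub>M (borel \<Otimes>\<^sub>M (borel \<Otimes>\<^sub>M (borel \<Otimes>\<^sub>M borel)))"
    by measurable
  from measurable_compose[OF this m] show ?thesis by simp
qed

lemma ind_pred[measurable (raw)]:
  fixes g h :: "'a \<Rightarrow> real"
  assumes [measurable]: "g \<in> N \<rightarrow>\<^sub>M borel" "h \<in> N \<rightarrow>\<^sub>M borel"
  shows "Measurable.pred N (\<lambda>z. h z \<in> {0..g z})"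
  unfolding atLeastAtMost_iff by measurable

end

locale setting = K \<Gamma> for \<Gamma> :: "real \<Rightarrow> real^'n \<Rightarrow> real \<Rightarrow> real^'n \<Rightarrow> real" +
  fixes M q :: real
  assumes Gnn: "\<And>t x s y. \<Gamma> t x s y \<ge> 0"
    and Gzero: "\<And>t x s y. s \<le> t \<Longrightarrow> \<Gamma> t x s y = 0"
    and Gsym: "\<And>x y t. \<Gamma> 0 y t x = \<Gamma> 0 x t y"
    and Gint: "\<And>x t. t > 0 \<Longrightarrow> (\<integral>\<^sup>+ y. ennreal (\<Gamma> 0 y t x) \<partial>lborel) = 1"
    and GCK: "\<And>x y t s. t > 0 \<Longrightarrow> s > 0 \<Longrightarrow>
        ennreal (\<Gamma> 0 y (t + s) x) = (\<integral>\<^sup>+ w. ennreal (\<Gamma> 0 w t x * \<Gamma> 0 y s w) \<partial>lborel)"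
    and Gbd: "\<And>x y s. s > 0 \<Longrightarrow> \<Gamma> 0 x s y \<le> M * s powr (-q/2)"
    and Mpos: "M > 0" and qpos: "q > 0"

locale sol = setting \<Gamma> M q for \<Gamma> :: "real \<Rightarrow> real^'n \<Rightarrow> real \<Rightarrow> real^'n \<Rightarrow> real" and M q +
  fixes u0 :: "real^'n \<Rightarrow> real" and E L :: real
  assumes u0m[measurable]: "u0 \<in> borel_measurable borel"
    and u0nn: "AE y in lborel. 0 \<le> u0 y"
    and u0E: "AE y in lborel. u0 y \<le> E"
    and u0L: "(\<integral>\<^sup>+ y. ennreal (u0 y) \<partial>lborel) \<le> ennreal L"
    and Enn: "E \<ge> 0" and Lnn: "L \<ge> 0"
begin

definition P :: "real \<Rightarrow> real^'n \<Rightarrow> ennreal" where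
  "P t x = (\<integral>\<^sup>+ y. ennreal (\<Gamma> 0 y t x * u0 y) \<partial>lborel)"

definition B :: "real \<Rightarrow> real" where
  "B t = min E (M * L * t powr (-q/2))"

lemma P_meas[measurable]: "(\<lambda>(t,x). P t x) \<in> borel_measurable (lborel \<Otimes>\<^sub>M lborel)"
  unfolding P_def by measurable

lemma P_nonpos: "t \<le> 0 \<Longrightarrow> P t x = 0"
  unfolding P_def by (simp add: Gzero)

lemma P_le_E: "P t x \<le> ennreal E"
proof (cases "t > 0")
  case True
  have "P t x \<le> (\<integral>\<^sup>+ y. ennreal (\<Gamma> 0 y t x) * ennreal E \<partial>lborel)"
    unfolding P_def
  proof (rule nn_integral_mono_AE)
    show "AE y in lborel. ennreal (\<Gamma> 0 y t x * u0 y) \<le> ennreal (\<Gamma> 0 y t x) * ennreal E"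
      using u0E
    proof eventually_elim
      case (elim y)
      have "\<Gamma> 0 y t x * u0 y \<le> \<Gamma> 0 y t x * E" using elim Gnn[of 0 y t x] by (rule mult_left_mono)
      then show ?case by (simp add: ennreal_mult[symmetric] Gnn Enn ennreal_leI)
    qed
  qed
  also have "\<dots> = ennreal E" using Gint[OF True] by (simp add: nn_integral_multc)
  finally show ?thesis .
qed (simp add: P_nonpos)

lemma P_le_L: assumes "t > 0" shows "P t x \<le> ennreal (M * L * t powr (-q/2))"
proof -
  have "P t x \<le> (\<integral>\<^sup>+ y. ennreal (M * t powr (-q/2)) * ennreal (u0 y) \<partial>lborel)"
    unfolding P_def
  proof (rule nn_integral_mono)
    fix y
    show "ennreal (\<Gamma> 0 y t x * u0 y) \<le> ennreal (M * t powr (-q/2)) * ennreal (u0 y)"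
    proof (cases "u0 y \<ge> 0")
      case True
      have "\<Gamma> 0 y t x * u0 y \<le> (M * t powr (-q/2)) * u0 y" using Gbd[OF assms, of y x] True by (rule mult_right_mono)
      then show ?thesis using True Mpos by (simp add: ennreal_mult[symmetric] ennreal_leI)
    next
      case False
      then have "\<Gamma> 0 y t x * u0 y \<le> 0" using Gnn[of 0 y t x] by (simp add: mult_nonneg_nonpos)
      then have "ennreal (\<Gamma> 0 y t x * u0 y) = 0" by (simp add: ennreal_eq_0_iff)
      then show ?thesis by simp
    qed
  qed
  also have "\<dots> = ennreal (M * t powr (-q/2)) * (\<integral>\<^sup>+ y. ennreal (u0 y) \<partial>lborel)"
    by (simp add: nn_integral_cmult)
  also have "\<dots> \<le> ennreal (M * t powr (-q/2)) * ennreal L"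
    using u0L by (rule mult_left_mono) simp
  also have "\<dots> = ennreal (M * L * t powr (-q/2))"
    using Mpos Lnn by (simp add: ennreal_mult'[symmetric] mult_ac)
  finally show ?thesis .
qed

lemma P_le_B: "t > 0 \<Longrightarrow> P t x \<le> ennreal (B t)"
proof -
  assume t: "t > 0"
  have "ennreal (B t) = min (ennreal E) (ennreal (M * L * t powr (-q/2)))"
    unfolding B_def using Enn Mpos Lnn by (subst min_ennreal) auto
  then show ?thesis using P_le_E[of t x] P_le_L[OF t, of x] by simp
qed

lemma P_fin: "P t x < \<infinity>"
  using P_le_E[of t x] by (simp add: le_less_trans)

lemma B_nn: "t > 0 \<Longrightarrow> B t \<ge> 0"
  unfolding B_def using Enn Mpos Lnn by simp

lemma SG:
  assumes "0 < \<tau>" "\<tau> < t"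
  shows "(\<integral>\<^sup>+ y. ennreal (\<Gamma> 0 y (t - \<tau>) x) * P \<tau> y \<partial>lborel) = P t x"
proof -
  have "(\<integral>\<^sup>+ y. ennreal (\<Gamma> 0 y (t - \<tau>) x) * P \<tau> y \<partial>lborel)
      = (\<integral>\<^sup>+ y. (\<integral>\<^sup>+ z. ennreal (\<Gamma> 0 y (t - \<tau>) x) * ennreal (\<Gamma> 0 z \<tau> y * u0 z) \<partial>lborel) \<partial>lborel)"
    unfolding P_def by (subst nn_integral_cmult) auto
  also have "\<dots> = (\<integral>\<^sup>+ z. (\<integral>\<^sup>+ y. ennreal (\<Gamma> 0 y (t - \<tau>) x) * ennreal (\<Gamma> 0 z \<tau> y * u0 z) \<partial>lborel) \<partial>lborel)"
    by (rule lborel_pair.Fubini') measurable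
  also have "\<dots> = (\<integral>\<^sup>+ z. ennreal (u0 z) * (\<integral>\<^sup>+ y. ennreal (\<Gamma> 0 y (t - \<tau>) x * \<Gamma> 0 z \<tau> y) \<partial>lborel) \<partial>lborel)"
  proof (rule nn_integral_cong)
    fix z
    have "ennreal (\<Gamma> 0 y (t - \<tau>) x) * ennreal (\<Gamma> 0 z \<tau> y * u0 z)
        = ennreal (u0 z) * ennreal (\<Gamma> 0 y (t - \<tau>) x * \<Gamma> 0 z \<tau> y)" for y
      using Gnn[of 0 y "t - \<tau>" x] Gnn[of 0 z \<tau> y]
      by (simp add: ennreal_mult'' ennreal_mult ennreal_mult' mult_ac)
    then show "(\<integral>\<^sup>+ y. ennreal (\<Gamma> 0 y (t - \<tau>) x) * ennreal (\<Gamma> 0 z \<tau> y * u0 z) \<partial>lborel)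
      = ennreal (u0 z) * (\<integral>\<^sup>+ y. ennreal (\<Gamma> 0 y (t - \<tau>) x * \<Gamma> 0 z \<tau> y) \<partial>lborel)"
      by (subst nn_integral_cmult[symmetric]) auto
  qed
  also have "\<dots> = (\<integral>\<^sup>+ z. ennreal (u0 z) * ennreal (\<Gamma> 0 z t x) \<partial>lborel)"
  proof (rule nn_integral_cong)
    fix z
    show "ennreal (u0 z) * (\<integral>\<^sup>+ y. ennreal (\<Gamma> 0 y (t - \<tau>) x * \<Gamma> 0 z \<tau> y) \<partial>lborel) = ennreal (u0 z) * ennreal (\<Gamma> 0 z t x)"
      using GCK[where x=x and y=z and t="t - \<tau>" and s=\<tau>] assms by simp
  qed
  also have "\<dots> = P t x"
    unfolding P_def using Gnn by (intro nn_integral_cong) (simp add: ennreal_mult'' mult_ac)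
  finally show ?thesis .
qed

end

context sol begin

lemma S_eq: "(\<integral>y. \<Gamma> 0 y t x * u0 y \<partial>lborel) = enn2real (P t x)"
  unfolding P_def
proof (rule integral_eq_nn_integral)
  show "AE y in lborel. 0 \<le> \<Gamma> 0 y t x * u0 y" using u0nn by eventually_elim (simp add: Gnn)
qed measurable

lemma esssup_S_le: assumes "t > 0"
  shows "esssup lborel (\<lambda>x. ereal \<bar>\<integral>y. \<Gamma> 0 y t x * u0 y \<partial>lborel\<bar>) \<le> ereal (B t)"
proof -
  have "esssup lborel (\<lambda>x. ereal \<bar>enn2real (P t x)\<bar>) \<le> ereal (B t)"
  proof (rule esssup_I)
    show "AE x in lborel. ereal \<bar>enn2real (P t x)\<bar> \<le> ereal (B t)"
      using P_le_B[OF assms] B_nn[OF assms] by (auto simp: enn2real_leI)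
  qed measurable
  then show ?thesis by (simp add: S_eq)
qed

lemma esssup_S_nn: "0 \<le> esssup lborel (\<lambda>x. ereal \<bar>\<integral>y. \<Gamma> 0 y t x * u0 y \<partial>lborel\<bar>)"
proof -
  have "esssup lborel (\<lambda>x::real^'n. 0::ereal) \<le> esssup lborel (\<lambda>x. ereal \<bar>\<integral>y. \<Gamma> 0 y t x * u0 y \<partial>lborel\<bar>)"
    by (rule esssup_mono) auto
  moreover have "esssup lborel (\<lambda>x::real^'n. 0::ereal) = 0" by (rule esssup_const) simp
  ultimately show ?thesis by simp
qed

lemma part1_pt: assumes "t > 0" "\<beta> > 0"
  shows "real_of_ereal (esssup lborel (\<lambda>x. ereal \<bar>\<integral>y. \<Gamma> 0 y t x * u0 y \<partial>lborel\<bar>)) powr \<beta> \<le> B t powr \<beta>"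
proof -
  let ?e = "esssup lborel (\<lambda>x. ereal \<bar>\<integral>y. \<Gamma> 0 y t x * u0 y \<partial>lborel\<bar>)"
  have "0 \<le> ?e" "?e \<le> ereal (B t)" using esssup_S_nn esssup_S_le[OF assms(1)] by auto
  then have "0 \<le> real_of_ereal ?e" "real_of_ereal ?e \<le> B t"
    by (auto simp: real_of_ereal_pos intro: real_of_ereal_le_0) (cases ?e; simp)
  then show ?thesis using assms(2) by (intro powr_mono2) auto
qed

end

locale nl = sol \<Gamma> M q u0 E L for \<Gamma> :: "real \<Rightarrow> real^'n \<Rightarrow> real \<Rightarrow> real^'n \<Rightarrow> real" and M q u0 E L +
  fixes f :: "real \<Rightarrow> real" and A \<alpha> :: real
  assumes fc: "continuous_on {0..} f" and fm: "mono_on {0..} f"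
    and fb: "\<And>u. u \<ge> 0 \<Longrightarrow> f u \<le> A * u powr \<alpha>"
    and fnn: "\<And>u. u \<ge> 0 \<Longrightarrow> f u \<ge> 0"
    and Apos: "A > 0" and \<alpha>gt: "\<alpha> > 1"
    and small: "(\<integral>\<^sup>+ \<tau>. ennreal (A * 2 powr \<alpha> * B \<tau> powr (\<alpha> - 1)) * indicator {0<..} \<tau> \<partial>lborel) \<le> 1"
begin

definition f0 :: "real \<Rightarrow> real" where "f0 s = f (max s 0)"

definition p :: "real \<Rightarrow> real^'n \<Rightarrow> real" where "p t x = enn2real (P t x)"

definition Phi :: "(real \<Rightarrow> real^'n \<Rightarrow> real) \<Rightarrow> real \<Rightarrow> real^'n \<Rightarrow> ennreal" where
  "Phi v t x = P t x + (\<integral>\<^sup>+ \<tau>. (\<integral>\<^sup>+ y. ennreal (\<Gamma> 0 y (t - \<tau>) x * f0 (v \<tau> y)) \<partial>lborel) * indicator {0..t} \<tau> \<partial>lborel)"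

lemma f0_cont: "continuous_on UNIV f0"
proof -
  have "continuous_on UNIV (f \<circ> (\<lambda>s. max s 0))"
    by (rule continuous_on_compose) (auto intro!: continuous_intros continuous_on_subset[OF fc])
  then show ?thesis by (simp add: f0_def o_def)
qed

lemma f0_meas[measurable]: "f0 \<in> borel_measurable borel"
  using f0_cont by (rule borel_measurable_continuous_onI)

lemma f0_mono: "a \<le> b \<Longrightarrow> f0 a \<le> f0 b"
  unfolding f0_def by (rule mono_onD[OF fm]) auto

lemma f0_nn: "f0 a \<ge> 0"
  unfolding f0_def by (rule fnn) simp

lemma f0_zero: "a \<le> 0 \<Longrightarrow> f0 a = 0"
proof -
  assume "a \<le> 0"
  then have "f0 a = f 0" unfolding f0_def by (simp add: max_def)
  moreover have "f 0 \<le> 0" using fb[of 0] by simp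
  ultimately show ?thesis using f0_nn[of a] by simp
qed

lemma p_nn: "p t x \<ge> 0" unfolding p_def by simp

lemma ennreal_p: "ennreal (p t x) = P t x"
  unfolding p_def using P_fin[of t x] by simp

lemma p_le_B: "t > 0 \<Longrightarrow> p t x \<le> B t"
  using P_le_B[of t x] B_nn[of t] unfolding p_def by (simp add: enn2real_leI)

lemma p_meas[measurable]: "(\<lambda>(t,x). p t x) \<in> borel_measurable (lborel \<Otimes>\<^sub>M lborel)"
  unfolding p_def by measurable

lemma Phi_mono:
  assumes "\<And>t x. v t x \<le> w t x"
  shows "Phi v t x \<le> Phi w t x"
  unfolding Phi_def
  by (intro add_left_mono nn_integral_mono mult_right_mono ennreal_leI mult_left_mono f0_mono assms Gnn) auto

lemma Phi_meas:
  assumes [measurable]: "(\<lambda>(t,x). v t x) \<in> borel_measurable (lborel \<Otimes>\<^sub>M lborel)"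
  shows "(\<lambda>(t,x). Phi v t x) \<in> borel_measurable (lborel \<Otimes>\<^sub>M lborel)"
  unfolding Phi_def by measurable

lemma B_meas[measurable]: "B \<in> borel_measurable borel"
  unfolding B_def by measurable

lemma c_meas[measurable]: "(\<lambda>\<tau>. ennreal (A * 2 powr \<alpha> * B \<tau> powr (\<alpha> - 1))) \<in> borel_measurable borel"
  by measurable

lemma B_zero: "B 0 = 0"
  unfolding B_def using Enn by simp

lemma inner_bound:
  assumes "0 \<le> \<tau>" "\<tau> \<le> t"
  shows "(\<integral>\<^sup>+ y. ennreal (\<Gamma> 0 y (t - \<tau>) x * f0 (2 * p \<tau> y)) \<partial>lborel)
     \<le> ennreal (A * 2 powr \<alpha> * B \<tau> powr (\<alpha> - 1)) * P t x"
proof (cases "\<tau> = 0 \<or> \<tau> = t")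
  case True
  then show ?thesis
  proof
    assume "\<tau> = 0"
    then have "p \<tau> y = 0" for y unfolding p_def by (simp add: P_nonpos)
    then show ?thesis by (simp add: f0_zero)
  next
    assume "\<tau> = t"
    then show ?thesis by (simp add: Gzero)
  qed
next
  case False
  then have t: "0 < \<tau>" "\<tau> < t" using assms by auto
  let ?c = "A * 2 powr \<alpha> * B \<tau> powr (\<alpha> - 1)"
  have c: "?c \<ge> 0" using Apos by simp
  have "(\<integral>\<^sup>+ y. ennreal (\<Gamma> 0 y (t - \<tau>) x * f0 (2 * p \<tau> y)) \<partial>lborel)
     \<le> (\<integral>\<^sup>+ y. ennreal ?c * (ennreal (\<Gamma> 0 y (t - \<tau>) x) * P \<tau> y) \<partial>lborel)"
  proof (rule nn_integral_mono)
    fix y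
    have pp: "0 \<le> p \<tau> y" "p \<tau> y \<le> B \<tau>" using p_nn p_le_B[OF t(1)] by auto
    have "f0 (2 * p \<tau> y) = f (2 * p \<tau> y)" unfolding f0_def using pp by simp
    also have "\<dots> \<le> A * (2 * p \<tau> y) powr \<alpha>" using pp by (intro fb) simp
    also have "(2 * p \<tau> y) powr \<alpha> = 2 powr \<alpha> * (p \<tau> y powr (\<alpha> - 1) * p \<tau> y)"
    proof -
      have "p \<tau> y powr \<alpha> = p \<tau> y powr (\<alpha> - 1) * p \<tau> y powr 1" using powr_add[of "p \<tau> y" "\<alpha> - 1" 1] by simp
      then have "p \<tau> y powr \<alpha> = p \<tau> y powr (\<alpha> - 1) * p \<tau> y" using pp by simp
      then show ?thesis using pp by (simp add: powr_mult)
    qed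
    also have "A * (2 powr \<alpha> * (p \<tau> y powr (\<alpha> - 1) * p \<tau> y)) \<le> A * (2 powr \<alpha> * (B \<tau> powr (\<alpha> - 1) * p \<tau> y))"
      using pp Apos \<alpha>gt by (intro mult_left_mono mult_right_mono powr_mono2) auto
    finally have "f0 (2 * p \<tau> y) \<le> ?c * p \<tau> y" by (simp add: mult_ac)
    then have "\<Gamma> 0 y (t - \<tau>) x * f0 (2 * p \<tau> y) \<le> \<Gamma> 0 y (t - \<tau>) x * (?c * p \<tau> y)"
      using Gnn[of 0 y "t - \<tau>" x] by (rule mult_left_mono)
    then have "ennreal (\<Gamma> 0 y (t - \<tau>) x * f0 (2 * p \<tau> y)) \<le> ennreal (?c * (\<Gamma> 0 y (t - \<tau>) x * p \<tau> y))"
      by (intro ennreal_leI) (simp add: mult_ac)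
    also have "\<dots> = ennreal ?c * (ennreal (\<Gamma> 0 y (t - \<tau>) x) * P \<tau> y)"
      using c pp Gnn by (simp add: ennreal_mult ennreal_p[symmetric])
    finally show "ennreal (\<Gamma> 0 y (t - \<tau>) x * f0 (2 * p \<tau> y)) \<le> ennreal ?c * (ennreal (\<Gamma> 0 y (t - \<tau>) x) * P \<tau> y)" .
  qed
  also have "\<dots> = ennreal ?c * P t x"
    using SG[OF t, of x] by (subst nn_integral_cmult) auto
  finally show ?thesis .
qed

lemma super: "Phi (\<lambda>t x. 2 * p t x) t x \<le> 2 * P t x"
proof -
  let ?c = "\<lambda>\<tau>. A * 2 powr \<alpha> * B \<tau> powr (\<alpha> - 1)"
  have "(\<integral>\<^sup>+ \<tau>. (\<integral>\<^sup>+ y. ennreal (\<Gamma> 0 y (t - \<tau>) x * f0 (2 * p \<tau> y)) \<partial>lborel) * indicator {0..t} \<tau> \<partial>lborel)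
      \<le> (\<integral>\<^sup>+ \<tau>. ennreal (?c \<tau>) * indicator {0<..} \<tau> * P t x \<partial>lborel)"
  proof (rule nn_integral_mono)
    fix \<tau>
    show "(\<integral>\<^sup>+ y. ennreal (\<Gamma> 0 y (t - \<tau>) x * f0 (2 * p \<tau> y)) \<partial>lborel) * indicator {0..t} \<tau>
       \<le> ennreal (?c \<tau>) * indicator {0<..} \<tau> * P t x"
    proof (cases "\<tau> \<in> {0..t}")
      case True
      show ?thesis
      proof (cases "\<tau> = 0")
        case True
        then have "p \<tau> y = 0" for y unfolding p_def by (simp add: P_nonpos)
        then show ?thesis by (simp add: f0_zero)
      next
        case False
        with True have "\<tau> \<in> {0<..}" by auto
        with True inner_bound[of \<tau> t x] show ?thesis by simp
      qed
    qed simp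
  qed
  also have "\<dots> = (\<integral>\<^sup>+ \<tau>. ennreal (?c \<tau>) * indicator {0<..} \<tau> \<partial>lborel) * P t x"
    by (rule nn_integral_multc[of "\<lambda>\<tau>. ennreal (?c \<tau>) * indicator {0<..} \<tau>" lborel "P t x"]) simp
  also have "\<dots> \<le> 1 * P t x"
    using small by (rule mult_right_mono) simp
  finally have "(\<integral>\<^sup>+ \<tau>. (\<integral>\<^sup>+ y. ennreal (\<Gamma> 0 y (t - \<tau>) x * f0 (2 * p \<tau> y)) \<partial>lborel) * indicator {0..t} \<tau> \<partial>lborel) \<le> P t x"
    by simp
  then have "Phi (\<lambda>t x. 2 * p t x) t x \<le> P t x + P t x" unfolding Phi_def by (rule add_left_mono)
  then show ?thesis by (simp only: mult_2)
qed

primrec w :: "nat \<Rightarrow> real \<Rightarrow> real^'n \<Rightarrow> real" where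
  "w 0 = (\<lambda>t x. 0)"
| "w (Suc k) = (\<lambda>t x. enn2real (Phi (w k) t x))"

lemma P2_fin: "2 * P t x < \<infinity>"
  using P_fin[of t x] by (simp add: ennreal_mult_less_top)

lemma w_props: "(\<lambda>(t,x). w k t x) \<in> borel_measurable (lborel \<Otimes>\<^sub>M lborel) \<and> (\<forall>t x. 0 \<le> w k t x \<and> w k t x \<le> 2 * p t x)"
proof (induction k)
  case 0
  then show ?case using p_nn by simp
next
  case (Suc k)
  then have m[measurable]: "(\<lambda>(t,x). w k t x) \<in> borel_measurable (lborel \<Otimes>\<^sub>M lborel)"
    and b: "\<And>t x. w k t x \<le> 2 * p t x" by auto
  have le: "Phi (w k) t x \<le> 2 * P t x" for t x
    using Phi_mono[of "w k" "\<lambda>t x. 2 * p t x", OF b] super order_trans by blast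
  have "enn2real (Phi (w k) t x) \<le> 2 * p t x" for t x
  proof -
    have "enn2real (Phi (w k) t x) \<le> enn2real (2 * P t x)"
      using le[of t x] P2_fin[of t x] by (intro enn2real_mono) auto
    also have "\<dots> = 2 * p t x" unfolding p_def by (simp add: enn2real_mult)
    finally show ?thesis .
  qed
  moreover have "(\<lambda>(t,x). enn2real (Phi (w k) t x)) \<in> borel_measurable (lborel \<Otimes>\<^sub>M lborel)"
    using Phi_meas[OF m] by measurable
  ultimately show ?case by simp
qed

lemma w_meas[measurable]: "(\<lambda>(t,x). w k t x) \<in> borel_measurable (lborel \<Otimes>\<^sub>M lborel)"
  using w_props by blast

lemma w_nn: "0 \<le> w k t x" and w_le: "w k t x \<le> 2 * p t x"
  using w_props by blast+

lemma Phi_w_le: "Phi (w k) t x \<le> 2 * P t x"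
  using Phi_mono[of "w k" "\<lambda>t x. 2 * p t x", OF w_le] super order_trans by blast

lemma Phi_w: "Phi (w k) t x = ennreal (w (Suc k) t x)"
  using Phi_w_le[of k t x] P2_fin[of t x] by simp

lemma w_mono: "w k t x \<le> w (Suc k) t x"
proof (induction k arbitrary: t x)
  case 0
  then show ?case using w_nn[of 1] by simp
next
  case (Suc k)
  have "Phi (w k) t x \<le> Phi (w (Suc k)) t x" using Suc by (intro Phi_mono)
  then have "ennreal (w (Suc k) t x) \<le> ennreal (w (Suc (Suc k)) t x)" by (simp only: Phi_w)
  then show ?case using w_nn by simp
qed

lemma w_inc: "incseq (\<lambda>k. w k t x)"
  by (rule incseq_SucI) (rule w_mono)

definition U :: "real \<Rightarrow> real^'n \<Rightarrow> real" where
  "U t x = enn2real (SUP k. ennreal (w k t x))"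

lemma e2p: "ennreal (2 * p t x) = 2 * P t x"
  using p_nn[of t x] by (simp add: ennreal_mult ennreal_p)

lemma SUP_w_le: "(SUP k. ennreal (w k t x)) \<le> 2 * P t x"
  by (rule SUP_least) (simp only: e2p[symmetric] ennreal_leI w_le)

lemma ennreal_U: "ennreal (U t x) = (SUP k. ennreal (w k t x))"
  unfolding U_def using SUP_w_le[of t x] P2_fin[of t x] by simp

lemma U_meas[measurable]: "(\<lambda>(t,x). U t x) \<in> borel_measurable (lborel \<Otimes>\<^sub>M lborel)"
  unfolding U_def by measurable

lemma U_nn: "0 \<le> U t x" unfolding U_def by simp

lemma U_le: "U t x \<le> 2 * p t x"
proof -
  have "ennreal (U t x) \<le> ennreal (2 * p t x)"
    using SUP_w_le[of t x] by (simp only: ennreal_U e2p)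
  then show ?thesis using p_nn[of t x] by (simp add: ennreal_le_iff)
qed

lemma w_lim: "(\<lambda>k. w k t x) \<longlonglongrightarrow> U t x"
proof -
  have "(\<lambda>k. ennreal (w k t x)) \<longlonglongrightarrow> (SUP k. ennreal (w k t x))"
    by (rule LIMSEQ_SUP) (simp add: incseq_def w_inc[unfolded incseq_def] ennreal_leI)
  then have "(\<lambda>k. ennreal (w k t x)) \<longlonglongrightarrow> ennreal (U t x)" by (simp add: ennreal_U)
  from tendsto_enn2real[OF this U_nn] show ?thesis by (simp add: w_nn)
qed

lemma g_SUP: "ennreal (\<Gamma> 0 y s x * f0 (U \<tau> y)) = (SUP k. ennreal (\<Gamma> 0 y s x * f0 (w k \<tau> y)))"
proof -
  have inc: "incseq (\<lambda>k. ennreal (\<Gamma> 0 y s x * f0 (w k \<tau> y)))"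
    by (rule incseq_SucI) (intro ennreal_leI mult_left_mono f0_mono w_mono Gnn)
  have "(\<lambda>k. f0 (w k \<tau> y)) \<longlonglongrightarrow> f0 (U \<tau> y)"
    using f0_cont w_lim by (rule continuous_on_tendsto_compose) auto
  then have "(\<lambda>k. ennreal (\<Gamma> 0 y s x * f0 (w k \<tau> y))) \<longlonglongrightarrow> ennreal (\<Gamma> 0 y s x * f0 (U \<tau> y))"
    by (intro tendsto_ennrealI tendsto_mult_left)
  moreover have "(\<lambda>k. ennreal (\<Gamma> 0 y s x * f0 (w k \<tau> y))) \<longlonglongrightarrow> (SUP k. ennreal (\<Gamma> 0 y s x * f0 (w k \<tau> y)))"
    using inc by (rule LIMSEQ_SUP)
  ultimately show ?thesis by (rule LIMSEQ_unique)
qed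

lemma SUP_shift_inc:
  fixes X :: "nat \<Rightarrow> ennreal"
  assumes "\<And>k. X k \<le> X (Suc k)"
  shows "(SUP k. X (Suc k)) = (SUP k. X k)"
proof (rule antisym)
  show "(SUP k. X (Suc k)) \<le> (SUP k. X k)" by (rule SUP_least, rule SUP_upper) simp
  show "(SUP k. X k) \<le> (SUP k. X (Suc k))" by (rule SUP_mono) (use assms in blast)
qed

lemma fixpoint: "Phi U t x = ennreal (U t x)"
proof -
  let ?g = "\<lambda>k \<tau> y. ennreal (\<Gamma> 0 y (t - \<tau>) x * f0 (w k \<tau> y))"
  let ?I = "\<lambda>k \<tau>. (\<integral>\<^sup>+ y. ?g k \<tau> y \<partial>lborel) * indicator {0..t} \<tau>"
  have inner: "(\<integral>\<^sup>+ y. ennreal (\<Gamma> 0 y (t - \<tau>) x * f0 (U \<tau> y)) \<partial>lborel) * indicator {0..t} \<tau> = (SUP k. ?I k \<tau>)" for \<tau>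
  proof -
    have "(\<integral>\<^sup>+ y. ennreal (\<Gamma> 0 y (t - \<tau>) x * f0 (U \<tau> y)) \<partial>lborel) = (\<integral>\<^sup>+ y. (SUP k. ?g k \<tau> y) \<partial>lborel)"
      by (simp only: g_SUP)
    also have "\<dots> = (SUP k. (\<integral>\<^sup>+ y. ?g k \<tau> y \<partial>lborel))"
    proof (rule nn_integral_monotone_convergence_SUP)
      show "incseq (\<lambda>k y. ?g k \<tau> y)"
        by (rule incseq_SucI) (auto simp: le_fun_def intro!: ennreal_leI mult_left_mono f0_mono w_mono w_mono[simplified] Gnn)
    qed measurable
    finally show ?thesis by (simp add: SUP_mult_right_ennreal)
  qed
  have "(\<integral>\<^sup>+ \<tau>. (\<integral>\<^sup>+ y. ennreal (\<Gamma> 0 y (t - \<tau>) x * f0 (U \<tau> y)) \<partial>lborel) * indicator {0..t} \<tau> \<partial>lborel)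
      = (\<integral>\<^sup>+ \<tau>. (SUP k. ?I k \<tau>) \<partial>lborel)" by (simp only: inner)
  also have "\<dots> = (SUP k. (\<integral>\<^sup>+ \<tau>. ?I k \<tau> \<partial>lborel))"
  proof (rule nn_integral_monotone_convergence_SUP)
    show "incseq ?I"
      by (rule incseq_SucI) (auto simp: le_fun_def intro!: mult_right_mono nn_integral_mono ennreal_leI mult_left_mono f0_mono w_mono w_mono[simplified] Gnn)
  qed measurable
  finally have "Phi U t x = P t x + (SUP k. (\<integral>\<^sup>+ \<tau>. ?I k \<tau> \<partial>lborel))" unfolding Phi_def by simp
  also have "\<dots> = (SUP k. P t x + (\<integral>\<^sup>+ \<tau>. ?I k \<tau> \<partial>lborel))"
    by (rule ennreal_SUP_add_right) simp
  also have "\<dots> = (SUP k. Phi (w k) t x)" unfolding Phi_def by simp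
  also have "\<dots> = (SUP k. ennreal (w (Suc k) t x))" by (simp only: Phi_w)
  also have "\<dots> = (SUP k. ennreal (w k t x))"
    by (rule SUP_shift_inc) (simp only: ennreal_leI w_mono)
  also have "\<dots> = ennreal (U t x)" by (simp add: ennreal_U)
  finally show ?thesis .
qed

lemma int_P: assumes "t > 0" shows "(\<integral>\<^sup>+ x. P t x \<partial>lborel) = (\<integral>\<^sup>+ y. ennreal (u0 y) \<partial>lborel)"
proof -
  have "(\<integral>\<^sup>+ x. P t x \<partial>lborel) = (\<integral>\<^sup>+ y. (\<integral>\<^sup>+ x. ennreal (\<Gamma> 0 y t x * u0 y) \<partial>lborel) \<partial>lborel)"
    unfolding P_def by (rule lborel_pair.Fubini'[symmetric]) measurable
  also have "\<dots> = (\<integral>\<^sup>+ y. ennreal (u0 y) * (\<integral>\<^sup>+ x. ennreal (\<Gamma> 0 x t y) \<partial>lborel) \<partial>lborel)"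
  proof (rule nn_integral_cong)
    fix y
    have "(\<integral>\<^sup>+ x. ennreal (\<Gamma> 0 y t x * u0 y) \<partial>lborel) = (\<integral>\<^sup>+ x. ennreal (u0 y) * ennreal (\<Gamma> 0 x t y) \<partial>lborel)"
    proof (rule nn_integral_cong)
      fix x
      show "ennreal (\<Gamma> 0 y t x * u0 y) = ennreal (u0 y) * ennreal (\<Gamma> 0 x t y)"
        using Gsym[where x=x and y=y and t=t] Gnn[of 0 x t y] by (simp add: ennreal_mult'' mult.commute)
    qed
    also have "\<dots> = ennreal (u0 y) * (\<integral>\<^sup>+ x. ennreal (\<Gamma> 0 x t y) \<partial>lborel)"
      by (rule nn_integral_cmult) measurable
    finally show "(\<integral>\<^sup>+ x. ennreal (\<Gamma> 0 y t x * u0 y) \<partial>lborel) = ennreal (u0 y) * (\<integral>\<^sup>+ x. ennreal (\<Gamma> 0 x t y) \<partial>lborel)" .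
  qed
  also have "\<dots> = (\<integral>\<^sup>+ y. ennreal (u0 y) \<partial>lborel)" using Gint[OF assms] by simp
  finally show ?thesis .
qed

definition u :: "real \<Rightarrow> real^'n \<Rightarrow> real" where
  "u t x = (if t = 0 then max (u0 x) 0 else U t x)"

lemma u_meas: "(\<lambda>pr. u (fst pr) (snd pr)) \<in> borel_measurable borel"
proof -
  have "(\<lambda>pr. u (fst pr) (snd pr)) \<in> borel_measurable (lborel \<Otimes>\<^sub>M lborel)"
    unfolding u_def by measurable
  then show ?thesis by (simp add: lborel_prod)
qed

lemma u_nn: "0 \<le> u t x" unfolding u_def by (simp add: U_nn)

lemma u_int: assumes "t \<ge> 0" shows "integrable lborel (u t)"
proof -
  have m: "u t \<in> borel_measurable lborel"
  proof -
    have "(\<lambda>(t,x). u t x) \<in> borel_measurable (lborel \<Otimes>\<^sub>M lborel)"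
      unfolding u_def by measurable
    from measurable_Pair2[OF this, of t] show ?thesis by simp
  qed
  have "(\<integral>\<^sup>+ x. ennreal (u t x) \<partial>lborel) < \<infinity>"
  proof (cases "t = 0")
    case True
    have "(\<integral>\<^sup>+ x. ennreal (u t x) \<partial>lborel) = (\<integral>\<^sup>+ x. ennreal (u0 x) \<partial>lborel)"
      using True by (intro nn_integral_cong) (simp add: u_def max_def ennreal_neg)
    also have "\<dots> \<le> ennreal L" by (rule u0L)
    finally show ?thesis by (simp add: le_less_trans)
  next
    case False
    with assms have t: "t > 0" by simp
    have "(\<integral>\<^sup>+ x. ennreal (u t x) \<partial>lborel) \<le> (\<integral>\<^sup>+ x. 2 * P t x \<partial>lborel)"
      using False by (intro nn_integral_mono) (simp add: u_def e2p[symmetric] ennreal_leI U_le)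
    also have "\<dots> = 2 * (\<integral>\<^sup>+ x. P t x \<partial>lborel)" by (rule nn_integral_cmult) measurable
    also have "\<dots> \<le> 2 * ennreal L" using int_P[OF t] u0L by (simp add: mult_left_mono)
    finally show ?thesis by (simp add: le_less_trans ennreal_mult_less_top)
  qed
  then show ?thesis using m u_nn by (intro integrableI_nonneg) auto
qed

lemma u_0: "AE x in lborel. u 0 x = u0 x"
  using u0nn by eventually_elim (simp add: u_def)

lemma f0_U: "f0 (U \<tau> y) = f (U \<tau> y)"
  unfolding f0_def using U_nn[of \<tau> y] by (simp add: max_absorb1)

lemma u_eq: assumes "t > 0"
  shows "ennreal (u t x) = (\<integral>\<^sup>+ y. ennreal (\<Gamma> 0 y t x * u0 y) \<partial>lborel) +
     (\<integral>\<^sup>+ \<tau>\<in>{0..t}. (\<integral>\<^sup>+ y. ennreal (\<Gamma> 0 y (t - \<tau>) x * f (u \<tau> y)) \<partial>lborel) \<partial>lborel)"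
proof -
  have "ennreal (u t x) = Phi U t x" using assms by (simp add: u_def fixpoint)
  also have "\<dots> = P t x + (\<integral>\<^sup>+ \<tau>\<in>{0..t}. (\<integral>\<^sup>+ y. ennreal (\<Gamma> 0 y (t - \<tau>) x * f (u \<tau> y)) \<partial>lborel) \<partial>lborel)"
    unfolding Phi_def
  proof (intro arg_cong2[where f="(+)"] refl nn_integral_cong_AE)
    show "AE \<tau> in lborel. (\<integral>\<^sup>+ y. ennreal (\<Gamma> 0 y (t - \<tau>) x * f0 (U \<tau> y)) \<partial>lborel) * indicator {0..t} \<tau>
       = (\<integral>\<^sup>+ y. ennreal (\<Gamma> 0 y (t - \<tau>) x * f (u \<tau> y)) \<partial>lborel) * indicator {0..t} \<tau>"
      using AE_lborel_singleton[of 0]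
      by eventually_elim (simp add: u_def f0_U)
  qed
  finally show ?thesis unfolding P_def .
qed

end


lemma C_fin:
  fixes M q \<beta> :: real
  assumes M: "M > 0" and q: "q > 0" and b: "\<beta> > 0" and bq: "\<beta> * q / 2 > 1"
  shows "(\<integral>\<^sup>+ \<tau>. ennreal (min 1 (M * \<tau> powr (-q/2)) powr \<beta>) * indicator {0<..} \<tau> \<partial>lborel) < \<infinity>"
proof -
  let ?g = "\<lambda>\<tau>::real. ennreal (min 1 (M * \<tau> powr (-q/2)) powr \<beta>) * indicator {0<..} \<tau>"
  let ?h1 = "\<lambda>\<tau>::real. indicator {0<..1} \<tau> :: ennreal"
  let ?h2 = "\<lambda>\<tau>::real. ennreal (M powr \<beta>) * (ennreal (\<tau> powr (-(\<beta> * q / 2))) * indicator {1..} \<tau>)"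
  have "(\<integral>\<^sup>+ \<tau>. ?g \<tau> \<partial>lborel) \<le> (\<integral>\<^sup>+ \<tau>. ?h1 \<tau> + ?h2 \<tau> \<partial>lborel)"
  proof (rule nn_integral_mono)
    fix \<tau> :: real
    show "?g \<tau> \<le> ?h1 \<tau> + ?h2 \<tau>"
    proof (cases "\<tau> > 0")
      case False then show ?thesis by simp
    next
      case True
      have mn: "0 \<le> min 1 (M * \<tau> powr (-q/2))" using M by simp
      show ?thesis
      proof (cases "\<tau> \<le> 1")
        case True
        have "min 1 (M * \<tau> powr (-q/2)) powr \<beta> \<le> 1 powr \<beta>" using mn b by (intro powr_mono2) auto
        then have "?g \<tau> \<le> ?h1 \<tau>" using True \<open>\<tau> > 0\<close> by (simp add: ennreal_leI)
        then show ?thesis by (rule order_trans) simp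
      next
        case False
        have "min 1 (M * \<tau> powr (-q/2)) powr \<beta> \<le> (M * \<tau> powr (-q/2)) powr \<beta>" using mn b by (intro powr_mono2) auto
        also have "\<dots> = M powr \<beta> * \<tau> powr (-(\<beta> * q / 2))"
          using M \<open>\<tau> > 0\<close> by (simp add: powr_mult powr_powr mult_ac)
        finally have "?g \<tau> \<le> ?h2 \<tau>" using False \<open>\<tau> > 0\<close> M
          by (simp add: ennreal_mult[symmetric] ennreal_leI)
        then show ?thesis by (rule order_trans) simp
      qed
    qed
  qed
  also have "\<dots> = (\<integral>\<^sup>+ \<tau>. ?h1 \<tau> \<partial>lborel) + (\<integral>\<^sup>+ \<tau>. ?h2 \<tau> \<partial>lborel)"
    by (rule nn_integral_add) auto
  also have "(\<integral>\<^sup>+ \<tau>. ?h2 \<tau> \<partial>lborel) = ennreal (M powr \<beta>) * (\<integral>\<^sup>+ \<tau>. ennreal (\<tau> powr (-(\<beta> * q / 2))) * indicator {1..} \<tau> \<partial>lborel)"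
    by (rule nn_integral_cmult) auto
  also have "(\<integral>\<^sup>+ \<tau>. ennreal (\<tau> powr (-(\<beta> * q / 2))) * indicator {1..} \<tau> \<partial>lborel)
      = ennreal (-(1 powr (-(\<beta> * q / 2) + 1)) / (-(\<beta> * q / 2) + 1))"
    by (rule nn_integral_has_integral_lebesgue'[OF _ has_integral_powr_to_inf]) (use bq in auto)
  finally have "(\<integral>\<^sup>+ \<tau>. ?g \<tau> \<partial>lborel) \<le> emeasure lborel {0<..1::real} + ennreal (M powr \<beta>) * ennreal (-(1 powr (-(\<beta> * q / 2) + 1)) / (-(\<beta> * q / 2) + 1))"
    by simp
  also have "\<dots> < \<infinity>" by (simp add: ennreal_mult_less_top)
  finally show ?thesis .
qed

lemma kernel_bound:
  fixes X :: "nat \<Rightarrow> real^'n \<Rightarrow> real^'n" and \<Gamma> :: "real \<Rightarrow> real^'n \<Rightarrow> real \<Rightarrow> real^'n \<Rightarrow> real"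
  assumes \<rho>: "\<rho> > 1" and c: "c > 0"
    and up: "\<And>x y s. s > 0 \<Longrightarrow> \<Gamma> 0 x s y \<le> \<rho> / measure lborel (cc_ball X m x (sqrt s)) * exp (- (cc_dist X m x y)\<^sup>2 / (\<rho> * s))"
    and vol: "\<And>x r. r > 0 \<Longrightarrow> ennreal (c * r ^ Q) \<le> emeasure lborel (cc_ball X m x r)"
    and s: "s > 0"
  shows "\<Gamma> 0 x s y \<le> (\<rho> / c) * s powr (- real Q / 2)"
proof -
  let ?\<mu> = "measure lborel (cc_ball X m x (sqrt s))"
  have ex: "exp (- (cc_dist X m x y)\<^sup>2 / (\<rho> * s)) \<le> 1"
    using \<rho> s by simp
  have "\<Gamma> 0 x s y \<le> \<rho> / ?\<mu> * exp (- (cc_dist X m x y)\<^sup>2 / (\<rho> * s))" using up[OF s] .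
  also have "\<dots> \<le> \<rho> / ?\<mu>" using ex \<rho> by (intro mult_left_le) auto
  also have "\<dots> \<le> (\<rho> / c) * s powr (- real Q / 2)"
  proof (cases "?\<mu> = 0")
    case True then show ?thesis using \<rho> c by simp
  next
    case False
    have sq: "sqrt s ^ Q = s powr (real Q / 2)"
    proof -
      have "sqrt s ^ Q = (s powr (1/2)) ^ Q" using s by (simp only: powr_half_sqrt less_imp_le)
      also have "\<dots> = s powr (real Q * (1/2))" using s by (intro powr_power) simp
      also have "\<dots> = s powr (real Q / 2)" by simp
      finally show ?thesis .
    qed
    have "ennreal (c * sqrt s ^ Q) \<le> emeasure lborel (cc_ball X m x (sqrt s))" using vol[of "sqrt s" x] s by simp
    moreover have "emeasure lborel (cc_ball X m x (sqrt s)) = ennreal ?\<mu>"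
    proof -
      have "emeasure lborel (cc_ball X m x (sqrt s)) \<noteq> \<infinity>"
        using False by (auto simp: measure_def)
      then show ?thesis using emeasure_eq_ennreal_measure[of lborel "cc_ball X m x (sqrt s)"] by (simp add: infinity_ennreal_def)
    qed
    ultimately have "ennreal (c * s powr (real Q / 2)) \<le> ennreal ?\<mu>" by (simp only: sq)
    then have le: "c * s powr (real Q / 2) \<le> ?\<mu>"
      using ennreal_le_iff[OF measure_nonneg[of lborel "cc_ball X m x (sqrt s)"]] by blast
    have pos: "c * s powr (real Q / 2) > 0" using c s by simp
    have "\<rho> / ?\<mu> \<le> \<rho> / (c * s powr (real Q / 2))"
      using le pos \<rho> by (intro divide_left_mono) (auto intro: mult_pos_pos)
    also have "\<dots> = (\<rho> / c) * s powr (- real Q / 2)"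
      using s by (simp add: powr_minus_divide)
    finally show ?thesis .
  qed
  finally show ?thesis .
qed


theorem mainTheorem3:
  fixes X :: "nat \<Rightarrow> real^'n \<Rightarrow> real^'n" and m :: nat and \<sigma> :: "'n \<Rightarrow> nat"
    and \<Gamma> :: "real \<Rightarrow> real^'n \<Rightarrow> real \<Rightarrow> real^'n \<Rightarrow> real"
    and f :: "real \<Rightarrow> real" and A \<alpha> :: real
  assumes hX: "hom_hoermander X m \<sigma>"
    and hG: "heat_kernel_props X m \<Gamma>"
    and hB: "ball_volume_bound X m (\<Sum>i\<in>UNIV. \<sigma> i)"
    and f_cont: "continuous_on {0..} f"
    and f_mono: "mono_on {0..} f"
    and f_nonneg: "\<forall>u\<ge>0. f u \<ge> 0"
    and f_bound: "\<forall>u\<ge>0. f u \<le> A * u powr \<alpha>"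
    and A_pos: "A > 0"
    and \<alpha>_gt: "\<alpha> > 1 + 2 / real (\<Sum>i\<in>UNIV. \<sigma> i)"
  shows "\<exists>\<epsilon>>0. \<forall>u0 :: real^'n \<Rightarrow> real.
      (AE x in lborel. u0 x \<ge> 0) \<and> integrable lborel u0 \<and>
      esssup lborel (\<lambda>x. ereal \<bar>u0 x\<bar>) < \<infinity> \<and>
      (\<integral>x. \<bar>u0 x\<bar> \<partial>lborel) < \<epsilon> \<and> esssup lborel (\<lambda>x. ereal \<bar>u0 x\<bar>) < ereal \<epsilon>
      \<longrightarrow>
      ((\<forall>t>0. esssup lborel (\<lambda>x. ereal \<bar>\<integral>y. \<Gamma> 0 y t x * u0 y \<partial>lborel\<bar>) < \<infinity>) \<and>
       (\<integral>\<^sup>+ t\<in>{0<..}.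
          ennreal (real_of_ereal (esssup lborel (\<lambda>x. ereal \<bar>\<integral>y. \<Gamma> 0 y t x * u0 y \<partial>lborel\<bar>))
                   powr (\<alpha> - 1)) \<partial>lborel)
         < ennreal (1 / (A * (\<alpha> - 1))))
      \<and>
      (\<exists>u :: real \<Rightarrow> real^'n \<Rightarrow> real.
          (\<lambda>p. u (fst p) (snd p)) \<in> borel_measurable borel \<and>
          (\<forall>t\<ge>0. \<forall>x. u t x \<ge> 0) \<and>
          (\<forall>t\<ge>0. integrable lborel (u t)) \<and>
          (AE x in lborel. u 0 x = u0 x) \<and>
          (\<forall>t>0. AE x in lborel.
             ennreal (u t x) =
               (\<integral>\<^sup>+ y. ennreal (\<Gamma> 0 y t x * u0 y) \<partial>lborel) +
               (\<integral>\<^sup>+ \<tau>\<in>{0..t}. (\<integral>\<^sup>+ y. ennreal (\<Gamma> 0 y (t - \<tau>) x * f (u \<tau> y)) \<partial>lborel) \<partial>lborel)))"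
proof -
  from hG obtain \<rho> where \<rho>: "\<rho> > 1" and bnds: "\<forall>x y s. s > 0 \<longrightarrow>
        1 / (\<rho> * measure lborel (cc_ball X m x (sqrt s))) * exp (- \<rho> * (cc_dist X m x y)\<^sup>2 / s)
          \<le> \<Gamma> 0 x s y \<and>
        \<Gamma> 0 x s y \<le> \<rho> / measure lborel (cc_ball X m x (sqrt s)) * exp (- (cc_dist X m x y)\<^sup>2 / (\<rho> * s))"
    using hG[unfolded heat_kernel_props_def, THEN conjunct2, THEN conjunct2, THEN conjunct2,
      THEN conjunct2, THEN conjunct2, THEN conjunct2] by blast
  note hGu = hG[unfolded heat_kernel_props_def]
  from hB obtain c where c: "c > 0" and vol: "\<forall>x r. r > 0 \<longrightarrow>
      ennreal (c * r ^ (\<Sum>i\<in>UNIV. \<sigma> i)) \<le> emeasure lborel (cc_ball X m x r)"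
    unfolding ball_volume_bound_def by blast
  define Q where "Q = (\<Sum>i\<in>UNIV. \<sigma> i)"
  define q where "q = real Q"
  define M where "M = \<rho> / c"
  have Mpos: "M > 0" unfolding M_def using \<rho> c by simp
  have "1 \<le> \<sigma> undefined" using hX unfolding hom_hoermander_def by blast
  moreover have "\<sigma> undefined \<le> Q" unfolding Q_def by (rule member_le_sum) auto
  ultimately have qpos: "q > 0" unfolding q_def by simp
  have Gbd: "\<Gamma> 0 x s y \<le> M * s powr (-q/2)" if "s > 0" for x y s
    unfolding M_def q_def
    by (rule kernel_bound[OF \<rho> c _ _ that]) (use bnds vol Q_def in auto)
  interpret setting \<Gamma> M q
  proof (unfold_locales)
    show "(\<lambda>(t, x, s, y). \<Gamma> t x s y) \<in> borel_measurable borel"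
      using hGu[THEN conjunct1] .
    show "\<And>t x s y. \<Gamma> t x s y \<ge> 0"
      using hGu[THEN conjunct2, THEN conjunct1] by blast
    show "\<And>t x s y. s \<le> t \<Longrightarrow> \<Gamma> t x s y = 0"
      using hGu[THEN conjunct2, THEN conjunct2, THEN conjunct1] by blast
    show "\<And>x y t. \<Gamma> 0 y t x = \<Gamma> 0 x t y"
      using hGu[THEN conjunct2, THEN conjunct2, THEN conjunct2, THEN conjunct1] by blast
    show "\<And>x t. t > 0 \<Longrightarrow> (\<integral>\<^sup>+ y. ennreal (\<Gamma> 0 y t x) \<partial>lborel) = 1"
      using hGu[THEN conjunct2, THEN conjunct2, THEN conjunct2, THEN conjunct2, THEN conjunct1] by blast
    show "\<And>x y t s. t > 0 \<Longrightarrow> s > 0 \<Longrightarrow>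
        ennreal (\<Gamma> 0 y (t + s) x) = (\<integral>\<^sup>+ w. ennreal (\<Gamma> 0 w t x * \<Gamma> 0 y s w) \<partial>lborel)"
      using hGu[THEN conjunct2, THEN conjunct2, THEN conjunct2, THEN conjunct2, THEN conjunct2, THEN conjunct1] by blast
  qed (use Gbd Mpos qpos in auto)
  define \<beta> where "\<beta> = \<alpha> - 1"
  have bq2: "\<beta> * q > 2"
  proof -
    have "\<beta> > 2 / q" using \<alpha>_gt unfolding \<beta>_def q_def Q_def by simp
    then show ?thesis using qpos by (simp add: field_simps)
  qed
  have bpos: "\<beta> > 0" using bq2 qpos by (smt (verit) mult_nonpos_nonneg)
  have bq: "\<beta> * q / 2 > 1" using bq2 by simp
  define C where "C = (\<integral>\<^sup>+ \<tau>. ennreal (min 1 (M * \<tau> powr (-q/2)) powr \<beta>) * indicator {0<..} \<tau> \<partial>lborel)"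
  have Cfin: "C < \<infinity>" unfolding C_def by (rule C_fin[OF Mpos qpos bpos bq])
  define Cr where "Cr = enn2real C"
  have Cr: "C = ennreal Cr" "Cr \<ge> 0" unfolding Cr_def using Cfin by auto
  define K' where "K' = A * 2 powr \<alpha> + 2 * A * \<beta>"
  have K'pos: "K' > 0" unfolding K'_def using A_pos bpos by (simp add: add_pos_pos)
  define \<epsilon> where "\<epsilon> = (1 / ((Cr + 1) * K')) powr (1 / \<beta>)"
  have den: "(Cr + 1) * K' > 0" using Cr K'pos by simp
  have epos: "\<epsilon> > 0" unfolding \<epsilon>_def using den Cr K'pos by simp
  have epow: "\<epsilon> powr \<beta> = 1 / ((Cr + 1) * K')"
    unfolding \<epsilon>_def using den bpos by (simp add: powr_powr)
  have key: "(\<integral>\<^sup>+ \<tau>. ennreal (K * min \<epsilon> (M * \<epsilon> * \<tau> powr (-q/2)) powr \<beta>) * indicator {0<..} \<tau> \<partial>lborel)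
      = ennreal (K * \<epsilon> powr \<beta>) * C" if K: "K \<ge> 0" for K
  proof -
    have "(\<integral>\<^sup>+ \<tau>. ennreal (K * min \<epsilon> (M * \<epsilon> * \<tau> powr (-q/2)) powr \<beta>) * indicator {0<..} \<tau> \<partial>lborel)
      = (\<integral>\<^sup>+ \<tau>. ennreal (K * \<epsilon> powr \<beta>) * (ennreal (min 1 (M * \<tau> powr (-q/2)) powr \<beta>) * indicator {0<..} \<tau>) \<partial>lborel)"
    proof (rule nn_integral_cong)
      fix \<tau> :: real
      have "min \<epsilon> (M * \<epsilon> * \<tau> powr (-q/2)) = \<epsilon> * min 1 (M * \<tau> powr (-q/2))"
        using epos by (simp add: min_mult_distrib_left mult_ac)
      then have "min \<epsilon> (M * \<epsilon> * \<tau> powr (-q/2)) powr \<beta> = \<epsilon> powr \<beta> * min 1 (M * \<tau> powr (-q/2)) powr \<beta>"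
        using epos Mpos by (simp add: powr_mult)
      then show "ennreal (K * min \<epsilon> (M * \<epsilon> * \<tau> powr (-q/2)) powr \<beta>) * indicator {0<..} \<tau>
        = ennreal (K * \<epsilon> powr \<beta>) * (ennreal (min 1 (M * \<tau> powr (-q/2)) powr \<beta>) * indicator {0<..} \<tau>)"
        using K by (simp add: ennreal_mult mult_ac)
    qed
    also have "\<dots> = ennreal (K * \<epsilon> powr \<beta>) * C"
      unfolding C_def by (rule nn_integral_cmult) simp
    finally show ?thesis .
  qed
  have key2: "(\<integral>\<^sup>+ \<tau>. ennreal (K * min \<epsilon> (M * \<epsilon> * \<tau> powr (-q/2)) powr \<beta>) * indicator {0<..} \<tau> \<partial>lborel)
      = ennreal (K * Cr / ((Cr + 1) * K'))" if K: "K \<ge> 0" for K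
  proof -
    have "ennreal (K * \<epsilon> powr \<beta>) * C = ennreal (K * \<epsilon> powr \<beta> * Cr)"
      unfolding Cr(1) by (subst ennreal_mult') (use K in auto)
    also have "K * \<epsilon> powr \<beta> * Cr = K * Cr / ((Cr + 1) * K')" by (simp add: epow)
    finally show ?thesis using key[OF K] by simp
  qed
  have frac: "Cr / ((Cr + 1) * K') < 1 / K'"
  proof -
    have "Cr / (Cr + 1) < 1" using Cr by simp
    then have "Cr / (Cr + 1) / K' < 1 / K'" using K'pos by (rule divide_strict_right_mono)
    then show ?thesis by (simp add: divide_divide_eq_left)
  qed
  show ?thesis
  proof (rule exI[of _ \<epsilon>], rule conjI[OF epos], intro allI impI)
    fix u0 :: "real^'n \<Rightarrow> real"
    assume H: "(AE x in lborel. u0 x \<ge> 0) \<and> integrable lborel u0 \<and>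
      esssup lborel (\<lambda>x. ereal \<bar>u0 x\<bar>) < \<infinity> \<and>
      (\<integral>x. \<bar>u0 x\<bar> \<partial>lborel) < \<epsilon> \<and> esssup lborel (\<lambda>x. ereal \<bar>u0 x\<bar>) < ereal \<epsilon>"
    then have u0nn: "AE x in lborel. u0 x \<ge> 0" and u0i: "integrable lborel u0"
      and u0l1: "(\<integral>x. \<bar>u0 x\<bar> \<partial>lborel) < \<epsilon>" and u0inf: "esssup lborel (\<lambda>x. ereal \<bar>u0 x\<bar>) < ereal \<epsilon>"
      by auto
    have u0m: "u0 \<in> borel_measurable borel" using borel_measurable_integrable[OF u0i] by simp
    have u0E: "AE y in lborel. u0 y \<le> \<epsilon>"
      using esssup_AE[of "\<lambda>x. ereal \<bar>u0 x\<bar>" lborel]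
    proof eventually_elim
      case (elim y)
      then have "ereal \<bar>u0 y\<bar> < ereal \<epsilon>" using u0inf by (rule le_less_trans)
      then show ?case by simp
    qed
    have u0L: "(\<integral>\<^sup>+ y. ennreal (u0 y) \<partial>lborel) \<le> ennreal \<epsilon>"
    proof -
      have "(\<integral>\<^sup>+ y. ennreal (u0 y) \<partial>lborel) \<le> (\<integral>\<^sup>+ y. ennreal \<bar>u0 y\<bar> \<partial>lborel)"
        by (intro nn_integral_mono ennreal_leI) simp
      also have "\<dots> = ennreal (\<integral>x. \<bar>u0 x\<bar> \<partial>lborel)"
        using u0i by (intro nn_integral_eq_integral) auto
      also have "\<dots> \<le> ennreal \<epsilon>" using u0l1 by (intro ennreal_leI) simp
      finally show ?thesis .
    qed
    interpret sol \<Gamma> M q u0 \<epsilon> \<epsilon>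
      by unfold_locales (use u0m u0nn u0E u0L epos in auto)
    have Bform: "B \<tau> = min \<epsilon> (M * \<epsilon> * \<tau> powr (-q/2))" for \<tau> unfolding B_def ..
    have small: "(\<integral>\<^sup>+ \<tau>. ennreal (A * 2 powr \<alpha> * B \<tau> powr (\<alpha> - 1)) * indicator {0<..} \<tau> \<partial>lborel) \<le> 1"
    proof -
      have "(\<integral>\<^sup>+ \<tau>. ennreal (A * 2 powr \<alpha> * B \<tau> powr (\<alpha> - 1)) * indicator {0<..} \<tau> \<partial>lborel)
          = ennreal (A * 2 powr \<alpha> * Cr / ((Cr + 1) * K'))"
        unfolding Bform \<beta>_def[symmetric] using A_pos by (intro key2) simp
      also have "\<dots> \<le> ennreal 1"
      proof (rule ennreal_leI)
        have "A * 2 powr \<alpha> * Cr / ((Cr + 1) * K') = (A * 2 powr \<alpha>) * (Cr / ((Cr + 1) * K'))" by simp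
        also have "\<dots> \<le> (A * 2 powr \<alpha>) * (1 / K')"
          using frac A_pos by (intro mult_left_mono) auto
        also have "\<dots> \<le> 1" using K'pos A_pos bpos unfolding K'_def by (simp add: field_simps)
        finally show "A * 2 powr \<alpha> * Cr / ((Cr + 1) * K') \<le> 1" .
      qed
      finally show ?thesis by simp
    qed
    interpret nl \<Gamma> M q u0 \<epsilon> \<epsilon> f A \<alpha>
    proof unfold_locales
      show "continuous_on {0..} f" by (rule f_cont)
      show "mono_on {0..} f" by (rule f_mono)
      show "\<And>u. u \<ge> 0 \<Longrightarrow> f u \<le> A * u powr \<alpha>" using f_bound by blast
      show "\<And>u. u \<ge> 0 \<Longrightarrow> f u \<ge> 0" using f_nonneg by blast
      show "A > 0" by (rule A_pos)
      have "2 / real (\<Sum>i\<in>UNIV. \<sigma> i) > 0" using qpos unfolding q_def Q_def by simp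
      then show "\<alpha> > 1" using \<alpha>_gt by linarith
      show "(\<integral>\<^sup>+ \<tau>. ennreal (A * 2 powr \<alpha> * B \<tau> powr (\<alpha> - 1)) * indicator {0<..} \<tau> \<partial>lborel) \<le> 1"
        by (rule small)
    qed
    have partA: "(\<forall>t>0. esssup lborel (\<lambda>x. ereal \<bar>\<integral>y. \<Gamma> 0 y t x * u0 y \<partial>lborel\<bar>) < \<infinity>) \<and>
       (\<integral>\<^sup>+ t\<in>{0<..}.
          ennreal (real_of_ereal (esssup lborel (\<lambda>x. ereal \<bar>\<integral>y. \<Gamma> 0 y t x * u0 y \<partial>lborel\<bar>))
                   powr (\<alpha> - 1)) \<partial>lborel)
         < ennreal (1 / (A * (\<alpha> - 1)))"
    proof
      show "\<forall>t>0. esssup lborel (\<lambda>x. ereal \<bar>\<integral>y. \<Gamma> 0 y t x * u0 y \<partial>lborel\<bar>) < \<infinity>"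
      proof (intro allI impI)
        fix t :: real assume "t > 0"
        from esssup_S_le[OF this] show "esssup lborel (\<lambda>x. ereal \<bar>\<integral>y. \<Gamma> 0 y t x * u0 y \<partial>lborel\<bar>) < \<infinity>"
          by (rule le_less_trans) simp
      qed
      have "(\<integral>\<^sup>+ t\<in>{0<..}.
          ennreal (real_of_ereal (esssup lborel (\<lambda>x. ereal \<bar>\<integral>y. \<Gamma> 0 y t x * u0 y \<partial>lborel\<bar>))
                   powr (\<alpha> - 1)) \<partial>lborel)
          \<le> (\<integral>\<^sup>+ \<tau>. ennreal (1 * min \<epsilon> (M * \<epsilon> * \<tau> powr (-q/2)) powr \<beta>) * indicator {0<..} \<tau> \<partial>lborel)"
      proof (rule nn_integral_mono)
        fix t :: real
        show "ennreal (real_of_ereal (esssup lborel (\<lambda>x. ereal \<bar>\<integral>y. \<Gamma> 0 y t x * u0 y \<partial>lborel\<bar>))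
                   powr (\<alpha> - 1)) * indicator {0<..} t
          \<le> ennreal (1 * min \<epsilon> (M * \<epsilon> * t powr (-q/2)) powr \<beta>) * indicator {0<..} t"
          using part1_pt[of t \<beta>] bpos unfolding Bform \<beta>_def
          by (cases "t > 0") (auto intro: ennreal_leI)
      qed
      also have "\<dots> = ennreal (1 * Cr / ((Cr + 1) * K'))" by (rule key2) simp
      also have "\<dots> < ennreal (1 / (A * (\<alpha> - 1)))"
      proof (rule ennreal_lessI)
        show "0 < 1 / (A * (\<alpha> - 1))" using A_pos bpos unfolding \<beta>_def by simp
        have "1 / K' \<le> 1 / (2 * A * \<beta>)"
          using A_pos bpos K'pos unfolding K'_def by (intro divide_left_mono) auto
        also have "\<dots> < 1 / (A * \<beta>)"
          using A_pos bpos by (simp add: field_simps)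
        finally show "1 * Cr / ((Cr + 1) * K') < 1 / (A * (\<alpha> - 1))"
          using frac unfolding \<beta>_def by simp
      qed
      finally show "(\<integral>\<^sup>+ t\<in>{0<..}.
          ennreal (real_of_ereal (esssup lborel (\<lambda>x. ereal \<bar>\<integral>y. \<Gamma> 0 y t x * u0 y \<partial>lborel\<bar>))
                   powr (\<alpha> - 1)) \<partial>lborel)
         < ennreal (1 / (A * (\<alpha> - 1)))" .
    qed
    have partB: "\<exists>u :: real \<Rightarrow> real^'n \<Rightarrow> real.
          (\<lambda>p. u (fst p) (snd p)) \<in> borel_measurable borel \<and>
          (\<forall>t\<ge>0. \<forall>x. u t x \<ge> 0) \<and>
          (\<forall>t\<ge>0. integrable lborel (u t)) \<and>
          (AE x in lborel. u 0 x = u0 x) \<and>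
          (\<forall>t>0. AE x in lborel.
             ennreal (u t x) =
               (\<integral>\<^sup>+ y. ennreal (\<Gamma> 0 y t x * u0 y) \<partial>lborel) +
               (\<integral>\<^sup>+ \<tau>\<in>{0..t}. (\<integral>\<^sup>+ y. ennreal (\<Gamma> 0 y (t - \<tau>) x * f (u \<tau> y)) \<partial>lborel) \<partial>lborel))"
      using u_meas u_nn u_int u_0 u_eq by blast
    show "((\<forall>t>0. esssup lborel (\<lambda>x. ereal \<bar>\<integral>y. \<Gamma> 0 y t x * u0 y \<partial>lborel\<bar>) < \<infinity>) \<and>
       (\<integral>\<^sup>+ t\<in>{0<..}.
          ennreal (real_of_ereal (esssup lborel (\<lambda>x. ereal \<bar>\<integral>y. \<Gamma> 0 y t x * u0 y \<partial>lborel\<bar>))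
                   powr (\<alpha> - 1)) \<partial>lborel)
         < ennreal (1 / (A * (\<alpha> - 1)))) \<and>
      (\<exists>u :: real \<Rightarrow> real^'n \<Rightarrow> real.
          (\<lambda>p. u (fst p) (snd p)) \<in> borel_measurable borel \<and>
          (\<forall>t\<ge>0. \<forall>x. u t x \<ge> 0) \<and>
          (\<forall>t\<ge>0. integrable lborel (u t)) \<and>
          (AE x in lborel. u 0 x = u0 x) \<and>
          (\<forall>t>0. AE x in lborel.
             ennreal (u t x) =
               (\<integral>\<^sup>+ y. ennreal (\<Gamma> 0 y t x * u0 y) \<partial>lborel) +
               (\<integral>\<^sup>+ \<tau>\<in>{0..t}. (\<integral>\<^sup>+ y. ennreal (\<Gamma> 0 y (t - \<tau>) x * f (u \<tau> y)) \<partial>lborel) \<partial>lborel)))"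
      using partA partB by (rule conjI)
  qed
qed

end
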